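(* Let $r:U\to\mathbb R$ be a $C^4$-smooth plurisubharmonic function on an open neighbourhood $U$ of $0\in\mathbb C^n$ with $r(0)=0$, and suppose that its Taylor expansion at $0$ has the form $$r(z)=\operatorname{Re} z_n+Q_2(z)+Q_3(z)+R_3(z),\qquad R_3(z)=o(\|z\|^3),$$ where for $j=2,3$, $Q_j(z)=\sum_{|\alpha|+|\beta|=j}a^j_{\alpha,\beta}z^\alpha\bar z^\beta$ is a real homogeneous polynomial of degree $j$. Write $H_j(z):=\sum_{|\alpha|=j}a^j_{\alpha,0}z^\alpha$ for $j=2,3$ (so that the sum of the terms of $Q_j$ with $\beta=0$ or $\alpha=0$ equals $2\operatorname{Re}H_j$). Then there exist a neighbourhood $V\subset U$ of $0$ and a constant $C>0$ such that $$r(z)\ge \operatorname{Re} z_n+2\operatorname{Re}\big(H_2(z)+H_3(z)\big)-C\|z\|^4\quad\text{for all } z\in V;$$ in particular $\{z\in V: r(z)<0\}\subset\{z\in V:\operatorname{Re} z_n+2\operatorname{Re}(H_2(z)+H_3(z))-C\|z\|^4<0\}$.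
   Context: Multi-index notation: for $\alpha,\beta\in\mathbb N^n$, $z^\alpha=z_1^{\alpha_1}\cdots z_n^{\alpha_n}$, $|\alpha|=\alpha_1+\dots+\alpha_n$; reality of $Q_j$ means $a^j_{\alpha,\beta}=\overline{a^j_{\beta,\alpha}}$. *)

theory Defs
  imports "HOL-Analysis.Analysis" "HOL-Library.Landau_Symbols"
begin

text \<open>C^k-smoothness of a real-valued function on an open subset of a finite-dimensional
  real normed space (here C^n viewed as R^{2n}): f is C^0 if continuous; f is C^(k+1) if it is
  (Frechet) differentiable at every point of U and every directional derivative
  x |-> Df(x) v is C^k on U.  (In finite dimensions this is the usual notion.)\<close>
fun Ck_on :: "nat \<Rightarrow> 'a::real_normed_vector set \<Rightarrow> ('a \<Rightarrow> real) \<Rightarrow> bool" where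
  "Ck_on 0 U f \<longleftrightarrow> continuous_on U f"
| "Ck_on (Suc k) U f \<longleftrightarrow>
     (\<exists>f'. (\<forall>x\<in>U. (f has_derivative f' x) (at x)) \<and> (\<forall>v. Ck_on k U (\<lambda>x. f' x v)))"

definition usc_on :: "'a::topological_space set \<Rightarrow> ('a \<Rightarrow> real) \<Rightarrow> bool" where
  "usc_on U u \<longleftrightarrow> (\<forall>x\<in>U. \<forall>c. u x < c \<longrightarrow> (\<forall>\<^sub>F y in at x within U. u y < c))"

definition psh_on :: "(complex ^ 'n) set \<Rightarrow> (complex ^ 'n \<Rightarrow> real) \<Rightarrow> bool" where
  "psh_on U u \<longleftrightarrow> usc_on U u \<and>
     (\<forall>a b. (\<forall>\<zeta>::complex. norm \<zeta> \<le> 1 \<longrightarrow> a + \<zeta> *s b \<in> U) \<longrightarrow>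
        u a \<le> (1 / (2 * pi)) * integral {0..2*pi} (\<lambda>t. u (a + cis t *s b)))"

definition mi_abs :: "('n::finite \<Rightarrow> nat) \<Rightarrow> nat" where
  "mi_abs \<alpha> = (\<Sum>i\<in>UNIV. \<alpha> i)"

definition zpow :: "complex ^ 'n::finite \<Rightarrow> ('n \<Rightarrow> nat) \<Rightarrow> complex" where
  "zpow z \<alpha> = (\<Prod>i\<in>UNIV. (z $ i) ^ (\<alpha> i))"

definition polyQ :: "nat \<Rightarrow> (('n::finite \<Rightarrow> nat) \<Rightarrow> ('n \<Rightarrow> nat) \<Rightarrow> complex) \<Rightarrow> complex ^ 'n \<Rightarrow> complex" where
  "polyQ j a z = (\<Sum>(\<alpha>,\<beta>)\<in>{(\<alpha>,\<beta>). mi_abs \<alpha> + mi_abs \<beta> = j}.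
       a \<alpha> \<beta> * zpow z \<alpha> * zpow (\<chi> i. cnj (z $ i)) \<beta>)"

definition polyH :: "nat \<Rightarrow> (('n::finite \<Rightarrow> nat) \<Rightarrow> ('n \<Rightarrow> nat) \<Rightarrow> complex) \<Rightarrow> complex ^ 'n \<Rightarrow> complex" where
  "polyH j a z = (\<Sum>\<alpha>\<in>{\<alpha>. mi_abs \<alpha> = j}. a \<alpha> (\<lambda>_. 0) * zpow z \<alpha>)"

definition real_coeffs :: "nat \<Rightarrow> (('n::finite \<Rightarrow> nat) \<Rightarrow> ('n \<Rightarrow> nat) \<Rightarrow> complex) \<Rightarrow> bool" where
  "real_coeffs j a \<longleftrightarrow> (\<forall>\<alpha> \<beta>. mi_abs \<alpha> + mi_abs \<beta> = j \<longrightarrow> a \<alpha> \<beta> = cnj (a \<beta> \<alpha>))"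

end

theory Submission
  imports Defs
begin



definition Dv :: "('a::real_normed_vector \<Rightarrow> real) \<Rightarrow> 'a \<Rightarrow> 'a \<Rightarrow> real" where
  "Dv f v = (\<lambda>x. frechet_derivative f (at x) v)"

fun dd :: "nat \<Rightarrow> ('a::real_normed_vector \<Rightarrow> real) \<Rightarrow> 'a \<Rightarrow> 'a \<Rightarrow> real" where
  "dd 0 f v x = f x"
| "dd (Suc k) f v x = dd k (Dv f v) v x"

lemma frechet_cong:
  assumes "open U" "y \<in> U" "\<And>x. x \<in> U \<Longrightarrow> f x = g x"
  shows "frechet_derivative f (at y) = frechet_derivative g (at y)"
proof -
  have "\<And>D. (f has_derivative D) (at y) \<longleftrightarrow> (g has_derivative D) (at y)"
    using has_derivative_transform_within_open[OF _ assms(1,2), of f _ _ g]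
      has_derivative_transform_within_open[OF _ assms(1,2), of g _ _ f] assms(3) by metis
  then show ?thesis unfolding frechet_derivative_def by simp
qed

lemma Dv_cong:
  assumes "open U" "y \<in> U" "\<And>x. x \<in> U \<Longrightarrow> f x = g x"
  shows "Dv f v y = Dv g v y"
  using frechet_cong[OF assms] by (simp add: Dv_def)

lemma dd_cong:
  assumes "open U" "\<And>x. x \<in> U \<Longrightarrow> f x = g x" "y \<in> U"
  shows "dd k f v y = dd k g v y"
  using assms(2,3)
proof (induction k arbitrary: f g y)
  case 0 then show ?case by simp
next
  case (Suc k)
  have "\<And>x. x \<in> U \<Longrightarrow> Dv f v x = Dv g v x" by (rule Dv_cong[OF assms(1)]) (auto simp: Suc.prems(1))
  then have "dd k (Dv f v) v y = dd k (Dv g v) v y" by (rule Suc.IH[OF _ Suc.prems(2)])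
  then show ?case by simp
qed

lemma Ck_cong:
  assumes "open U" "\<And>x. x \<in> U \<Longrightarrow> f x = g x" "Ck_on k U f"
  shows "Ck_on k U g"
  using assms(2,3)
proof (induction k arbitrary: f g)
  case 0 then show ?case using continuous_on_cong by force
next
  case (Suc k)
  then obtain f' where f': "\<forall>x\<in>U. (f has_derivative f' x) (at x)" "\<forall>v. Ck_on k U (\<lambda>x. f' x v)" by auto
  have "\<forall>x\<in>U. (g has_derivative f' x) (at x)"
    using f'(1) has_derivative_transform_within_open[OF _ assms(1)] Suc.prems(1) by metis
  then show ?case using f'(2) by auto
qed

lemma Ck_cont: assumes "Ck_on k U f" shows "continuous_on U f"
proof (cases k)
  case 0 then show ?thesis using assms by simp
next
  case (Suc j)
  then obtain f' where "\<forall>x\<in>U. (f has_derivative f' x) (at x)" using assms by auto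
  then show ?thesis
    by (intro continuous_at_imp_continuous_on ballI has_derivative_continuous) auto
qed

lemma Ck_Dv:
  assumes "open U" "Ck_on (Suc k) U f"
  shows "\<forall>x\<in>U. (f has_derivative (\<lambda>v. Dv f v x)) (at x)" "\<And>v. Ck_on k U (Dv f v)"
proof -
  obtain f' where f': "\<forall>x\<in>U. (f has_derivative f' x) (at x)" "\<forall>v. Ck_on k U (\<lambda>x. f' x v)"
    using assms(2) by auto
  have e: "\<And>x v. x \<in> U \<Longrightarrow> Dv f v x = f' x v"
    using f'(1) frechet_derivative_at unfolding Dv_def by metis
  show "\<forall>x\<in>U. (f has_derivative (\<lambda>v. Dv f v x)) (at x)"
    using f'(1) e by (metis (no_types, lifting) ext)
  show "\<And>v. Ck_on k U (Dv f v)"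
    using Ck_cong[OF assms(1) _ f'(2)[rule_format]] e by metis
qed


lemma dd_sum:
  assumes "open U" "finite I" "\<And>i. i \<in> I \<Longrightarrow> Ck_on k U (g i)" "x \<in> U"
  shows "dd k (\<lambda>y. \<Sum>i\<in>I. c i * g i y) v x = (\<Sum>i\<in>I. c i * dd k (g i) v x)"
  using assms(3,4)
proof (induction k arbitrary: g x)
  case 0 then show ?case by simp
next
  case (Suc k)
  have d: "\<forall>y\<in>U. (g i has_derivative (\<lambda>v. Dv (g i) v y)) (at y)" if "i \<in> I" for i
    using Ck_Dv(1)[OF assms(1) Suc.prems(1)[OF that]] .
  have c: "Ck_on k U (Dv (g i) v)" if "i \<in> I" for i
    using Ck_Dv(2)[OF assms(1) Suc.prems(1)[OF that]] .
  have "\<And>y. y \<in> U \<Longrightarrow> Dv (\<lambda>y. \<Sum>i\<in>I. c i * g i y) v y = (\<Sum>i\<in>I. c i * Dv (g i) v y)"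
  proof -
    fix y assume y: "y \<in> U"
    have "((\<lambda>y. \<Sum>i\<in>I. c i * g i y) has_derivative (\<lambda>w. \<Sum>i\<in>I. c i * Dv (g i) w y)) (at y)"
      by (intro has_derivative_sum has_derivative_mult_right) (use d y in auto)
    note h = this
    show "Dv (\<lambda>y. \<Sum>i\<in>I. c i * g i y) v y = (\<Sum>i\<in>I. c i * Dv (g i) v y)"
      by (simp add: Dv_def frechet_derivative_at[OF h, symmetric])
  qed
  then have "dd k (Dv (\<lambda>y. \<Sum>i\<in>I. c i * g i y) v) v x = dd k (\<lambda>y. \<Sum>i\<in>I. c i * Dv (g i) v y) v x"
    by (intro dd_cong[OF assms(1) _ Suc.prems(2)]) auto
  also have "\<dots> = (\<Sum>i\<in>I. c i * dd k (Dv (g i) v) v x)"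
    by (rule Suc.IH[OF c Suc.prems(2)])
  finally show ?case by simp
qed

lemma Dv_basis:
  fixes f :: "'a::euclidean_space \<Rightarrow> real"
  assumes "(f has_derivative (\<lambda>v. Dv f v y)) (at y)"
  shows "Dv f v y = (\<Sum>i\<in>Basis. (v \<bullet> i) * Dv f i y)"
proof -
  have l: "linear (\<lambda>v. Dv f v y)" using assms has_derivative_linear by blast
  have "Dv f v y = Dv f (\<Sum>i\<in>Basis. (v \<bullet> i) *\<^sub>R i) y" by (simp add: euclidean_representation)
  also have "\<dots> = (\<Sum>i\<in>Basis. (v \<bullet> i) * Dv f i y)"
    by (simp only: linear_sum[OF l] linear_scale[OF l]) simp
  finally show ?thesis .
qed

lemma dd_bound:
  fixes f :: "'a::euclidean_space \<Rightarrow> real"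
  assumes "open U" "compact S" "S \<subseteq> U" "Ck_on k U f"
  shows "\<exists>M. \<forall>x\<in>S. \<forall>v. \<bar>dd k f v x\<bar> \<le> M * norm v ^ k"
  using assms(4)
proof (induction k arbitrary: f)
  case 0
  have "continuous_on S f" using Ck_cont[OF 0] assms(3) continuous_on_subset by blast
  then have "bounded (f ` S)" using compact_continuous_image assms(2) compact_imp_bounded by blast
  then obtain M where "\<forall>y\<in>f ` S. norm y \<le> M" by (meson bounded_iff)
  then show ?case by auto
next
  case (Suc k)
  have d: "\<forall>y\<in>U. (f has_derivative (\<lambda>v. Dv f v y)) (at y)" using Ck_Dv(1)[OF assms(1) Suc.prems] .
  have c: "\<And>v. Ck_on k U (Dv f v)" using Ck_Dv(2)[OF assms(1) Suc.prems] .
  have "\<forall>i\<in>Basis. \<exists>M. \<forall>x\<in>S. \<forall>v. \<bar>dd k (Dv f i) v x\<bar> \<le> M * norm v ^ k"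
    using Suc.IH[OF c] by blast
  then obtain M where M: "\<And>i x v. i \<in> Basis \<Longrightarrow> x \<in> S \<Longrightarrow> \<bar>dd k (Dv f i) v x\<bar> \<le> M i * norm v ^ k"
    by metis
  show ?case
  proof (intro exI ballI allI)
    fix x v assume x: "x \<in> S"
    then have xU: "x \<in> U" using assms(3) by auto
    have "dd k (Dv f v) v x = dd k (\<lambda>y. \<Sum>i\<in>Basis. (v \<bullet> i) * Dv f i y) v x"
      by (rule dd_cong[OF assms(1) _ xU], rule Dv_basis) (use d in blast)
    then have "dd (Suc k) f v x = dd k (\<lambda>y. \<Sum>i\<in>Basis. (v \<bullet> i) * Dv f i y) v x"
      by simp
    also have "\<dots> = (\<Sum>i\<in>Basis. (v \<bullet> i) * dd k (Dv f i) v x)"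
      by (rule dd_sum[OF assms(1) _ c xU]) auto
    finally have "\<bar>dd (Suc k) f v x\<bar> \<le> (\<Sum>i\<in>Basis. \<bar>(v \<bullet> i) * dd k (Dv f i) v x\<bar>)"
      using sum_abs by simp
    also have "\<dots> = (\<Sum>i\<in>Basis. \<bar>v \<bullet> i\<bar> * \<bar>dd k (Dv f i) v x\<bar>)"
      by (simp add: abs_mult)
    also have "\<dots> \<le> (\<Sum>i\<in>Basis. norm v * (\<bar>M i\<bar> * norm v ^ k))"
    proof (intro sum_mono mult_mono)
      fix i :: 'a assume i: "i \<in> Basis"
      show "\<bar>v \<bullet> i\<bar> \<le> norm v" using Basis_le_norm[OF i] .
      show "\<bar>dd k (Dv f i) v x\<bar> \<le> \<bar>M i\<bar> * norm v ^ k"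
      proof -
        have "M i * norm v ^ k \<le> \<bar>M i\<bar> * norm v ^ k" by (intro mult_right_mono) auto
        then show ?thesis using M[OF i x, of v] by linarith
      qed
    qed auto
    also have "\<dots> = (\<Sum>i\<in>Basis. \<bar>M i\<bar>) * norm v ^ Suc k"
      by (simp add: sum_distrib_left sum_distrib_right algebra_simps)
    finally show "\<bar>dd (Suc k) f v x\<bar> \<le> (\<Sum>i\<in>Basis. \<bar>M i\<bar>) * norm v ^ Suc k" .
  qed
qed

lemma dd_deriv:
  fixes f :: "'a::real_normed_vector \<Rightarrow> real"
  assumes "open U" "Ck_on (Suc k) U f" "x + t *\<^sub>R v \<in> U"
  shows "((\<lambda>s. dd k f v (x + s *\<^sub>R v)) has_real_derivative dd (Suc k) f v (x + t *\<^sub>R v)) (at t)"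
  using assms(2)
proof (induction k arbitrary: f)
  case 0
  have d: "(f has_derivative (\<lambda>w. Dv f w (x + t *\<^sub>R v))) (at (x + t *\<^sub>R v))"
    using Ck_Dv(1)[OF assms(1) 0] assms(3) by blast
  have l: "linear (\<lambda>w. Dv f w (x + t *\<^sub>R v))" using d has_derivative_linear by blast
  have i: "((\<lambda>s. x + s *\<^sub>R v) has_derivative (\<lambda>h. h *\<^sub>R v)) (at t)"
    by (auto intro!: derivative_eq_intros)
  have "((\<lambda>s. f (x + s *\<^sub>R v)) has_derivative (\<lambda>h. Dv f (h *\<^sub>R v) (x + t *\<^sub>R v))) (at t)"
    using has_derivative_compose[OF i d] by (simp add: o_def)
  moreover have "(\<lambda>h. Dv f (h *\<^sub>R v) (x + t *\<^sub>R v)) = (\<lambda>h. h * Dv f v (x + t *\<^sub>R v))"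
    using linear_scale[OF l] by auto
  moreover have "(\<lambda>h. h * Dv f v (x + t *\<^sub>R v)) = (*) (Dv f v (x + t *\<^sub>R v))"
    by (auto simp: mult.commute)
  ultimately show ?case by (simp add: has_field_derivative_def)
next
  case (Suc k)
  have "Ck_on (Suc k) U (Dv f v)" using Ck_Dv(2)[OF assms(1) Suc.prems] .
  from Suc.IH[OF this] show ?case by simp
qed




lemma Ck_mono: "Ck_on (Suc k) U f \<Longrightarrow> Ck_on k U f"
proof (induction k arbitrary: f)
  case 0 then show ?case using Ck_cont[OF 0] by simp
next
  case (Suc k)
  then obtain f' where "\<forall>x\<in>U. (f has_derivative f' x) (at x)" "\<forall>v. Ck_on (Suc k) U (\<lambda>x. f' x v)"
    by auto
  then show ?case using Suc.IH by auto
qed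

lemma Ck_le: "k \<le> n \<Longrightarrow> Ck_on n U f \<Longrightarrow> Ck_on k U f"
  by (induction n rule: dec_induct) (assumption, metis Ck_mono)

lemma poly_small:
  fixes d0 d1 d2 d3 :: real
  assumes g: "((\<lambda>s. (d0 + d1* s + d2* s^2 + d3* s^3) / s^3) \<longlongrightarrow> 0) (at_right 0)"
  shows "d0 = 0 \<and> d1 = 0 \<and> d2 = 0 \<and> d3 = 0"
proof -
  define g where "g = (\<lambda>s::real. (d0 + d1* s + d2* s^2 + d3* s^3) / s^3)"
  have g0: "(g \<longlongrightarrow> 0) (at_right 0)" using assms g_def by simp
  have ev: "\<forall>\<^sub>F s in at_right 0. (0::real) < s" by (rule eventually_at_right_less)
  have id: "((\<lambda>s::real. s) \<longlongrightarrow> 0) (at_right 0)" by (rule tendsto_ident_at)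
  have nb: "at_right (0::real) \<noteq> bot" by simp
  have A: "((\<lambda>s. s^j * g s) \<longlongrightarrow> 0) (at_right 0)" for j :: nat
    using tendsto_mult[OF tendsto_power[OF id, of j] g0] by simp
  have "((\<lambda>s. d0 + d1* s + d2* s^2 + d3* s^3) \<longlongrightarrow> d0 + d1*0 + d2*0^2 + d3*0^3) (at_right 0)"
    by (intro tendsto_intros id)
  moreover have "((\<lambda>s. d0 + d1* s + d2* s^2 + d3* s^3) \<longlongrightarrow> 0) (at_right 0)"
    by (rule Lim_transform_eventually[OF A[of 3]]) (use ev in \<open>eventually_elim, simp add: g_def\<close>)
  ultimately have e0: "d0 = 0" using tendsto_unique[OF nb] by force
  have "((\<lambda>s. d1 + d2* s + d3* s^2) \<longlongrightarrow> d1 + d2*0 + d3*0^2) (at_right 0)"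
    by (intro tendsto_intros id)
  moreover have "((\<lambda>s. d1 + d2* s + d3* s^2) \<longlongrightarrow> 0) (at_right 0)"
    by (rule Lim_transform_eventually[OF A[of 2]])
       (use ev in \<open>eventually_elim, simp add: g_def e0 field_simps power2_eq_square power3_eq_cube\<close>)
  ultimately have e1: "d1 = 0" using tendsto_unique[OF nb] by force
  have "((\<lambda>s. d2 + d3* s) \<longlongrightarrow> d2 + d3*0) (at_right 0)"
    by (intro tendsto_intros id)
  moreover have "((\<lambda>s. d2 + d3* s) \<longlongrightarrow> 0) (at_right 0)"
    by (rule Lim_transform_eventually[OF A[of 1]])
       (use ev in \<open>eventually_elim, simp add: g_def e0 e1 field_simps power2_eq_square power3_eq_cube\<close>)
  ultimately have e2: "d2 = 0" using tendsto_unique[OF nb] by force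
  have "((\<lambda>s::real. d3) \<longlongrightarrow> 0) (at_right 0)"
    by (rule Lim_transform_eventually[where g="\<lambda>s. d3", OF A[of 0]])
       (use ev in \<open>eventually_elim, simp add: g_def e0 e1 e2 field_simps power2_eq_square power3_eq_cube\<close>)
  then have e3: "d3 = 0" using tendsto_unique[OF nb] tendsto_const by blast
  show ?thesis using e0 e1 e2 e3 by simp
qed


lemma R_bound:
  fixes f P :: "'a::euclidean_space \<Rightarrow> real" and p1 p2 p3 :: "'a \<Rightarrow> real"
  assumes U: "open U" "0 \<in> U" and C: "Ck_on 4 U f" and f0: "f 0 = 0"
    and hom: "\<And>z s. P (s *\<^sub>R z) = s * p1 z + s^2 * p2 z + s^3 * p3 z"
    and o: "(\<lambda>z. f z - P z) \<in> o[at 0](\<lambda>z. norm z ^ 3)"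
  shows "\<exists>\<delta>>0. \<exists>K. cball 0 \<delta> \<subseteq> U \<and> (\<forall>z\<in>cball 0 \<delta>. \<bar>f z - P z\<bar> \<le> K * norm z ^ 4)"
proof -
  obtain \<delta> where d: "\<delta> > 0" "cball 0 \<delta> \<subseteq> U" using open_contains_cball U by blast
  obtain M where M: "\<forall>x\<in>cball 0 \<delta>. \<forall>v. \<bar>dd 4 f v x\<bar> \<le> M * norm v ^ 4"
    using dd_bound[OF U(1) compact_cball d(2) C] by blast
  have P0: "P 0 = 0" using hom[of 0 0] by simp
  have "\<forall>z\<in>cball 0 \<delta>. \<bar>f z - P z\<bar> \<le> M / fact 4 * norm z ^ 4"
  proof
    fix z :: 'a assume z: "z \<in> cball 0 \<delta>"
    have seg: "t *\<^sub>R z \<in> cball 0 \<delta>" if "0 \<le> t" "t \<le> 1" for t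
      using z that by (auto simp: mult_le_one order_trans[OF mult_left_le_one_le])
    define c where "c m = dd m f z 0 / fact m" for m
    have T: "\<bar>f (s *\<^sub>R z) - (\<Sum>m<4. c m * s^m)\<bar> \<le> M / fact 4 * norm z ^ 4 * s ^ 4"
      if s: "0 < s" "s \<le> 1" for s
    proof -
      have "\<exists>t. 0 < t \<and> t < s \<and> f (s *\<^sub>R z) =
          (\<Sum>m<4. ((\<lambda>m t. dd m f z (t *\<^sub>R z)) m 0 / fact m) * (s - 0)^m)
          + ((\<lambda>m t. dd m f z (t *\<^sub>R z)) 4 t / fact 4) * (s - 0)^4"
      proof (rule Taylor_up[where f = "\<lambda>t. f (t *\<^sub>R z)"])
        show "(\<lambda>m t. dd m f z (t *\<^sub>R z)) 0 = (\<lambda>t. f (t *\<^sub>R z))" by simp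
        show "\<forall>m t. m < 4 \<and> 0 \<le> t \<and> t \<le> s \<longrightarrow>
          ((\<lambda>m t. dd m f z (t *\<^sub>R z)) m has_real_derivative (\<lambda>m t. dd m f z (t *\<^sub>R z)) (Suc m) t) (at t)"
        proof (intro allI impI)
          fix m :: nat and t :: real assume mt: "m < 4 \<and> 0 \<le> t \<and> t \<le> s"
          have "Ck_on (Suc m) U f" using Ck_le[OF _ C, of "Suc m"] mt by simp
          moreover have "0 + t *\<^sub>R z \<in> U" using seg[of t] mt s d(2) by auto
          ultimately show "((\<lambda>m t. dd m f z (t *\<^sub>R z)) m has_real_derivative (\<lambda>m t. dd m f z (t *\<^sub>R z)) (Suc m) t) (at t)"
            using dd_deriv[OF U(1), of m f 0 t z] by simp
        qed
      qed (use s in auto)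
      then obtain t where t: "0 < t" "t < s" and
        eq: "f (s *\<^sub>R z) = (\<Sum>m<4. c m * s^m) + dd 4 f z (t *\<^sub>R z) / fact 4 * s^4"
        by (auto simp: c_def)
      have "\<bar>dd 4 f z (t *\<^sub>R z)\<bar> \<le> M * norm z ^ 4" using M seg[of t] t s by auto
      then show ?thesis using eq by (simp add: abs_mult divide_right_mono mult_right_mono)
    qed
    show "\<bar>f z - P z\<bar> \<le> M / fact 4 * norm z ^ 4"
    proof (cases "z = 0")
      case True then show ?thesis using f0 P0 by simp
    next
      case False
      have c0: "c 0 = 0" using f0 by (simp add: c_def)
      define d1 d2 d3 where "d1 = c 1 - p1 z" "d2 = c 2 - p2 z" "d3 = c 3 - p3 z"
      have ev0: "\<forall>\<^sub>F s in at_right 0. (0::real) < s" by (rule eventually_at_right_less)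
      have ev1: "\<forall>\<^sub>F s in at_right 0. s < (1::real)"
        using order_tendstoD(2)[OF tendsto_ident_at[of "0::real" "{0<..}"], of 1] by simp
      have fl: "filterlim (\<lambda>s::real. s *\<^sub>R z) (at 0) (at_right 0)"
        unfolding filterlim_at
      proof
        show "\<forall>\<^sub>F s in at_right 0. s *\<^sub>R z \<in> UNIV \<and> s *\<^sub>R z \<noteq> 0"
          using False by (auto intro: eventually_mono[OF ev0])
        have "((\<lambda>s::real. s *\<^sub>R z) \<longlongrightarrow> 0 *\<^sub>R z) (at_right 0)"
          by (intro tendsto_intros)
        then show "((\<lambda>s::real. s *\<^sub>R z) \<longlongrightarrow> 0) (at_right 0)" by simp
      qed
      have L1: "((\<lambda>w. (f w - P w) / norm w ^ 3) \<longlongrightarrow> 0) (at 0)"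
        using smalloD_tendsto[OF o] .
      have L2: "((\<lambda>s. (f (s *\<^sub>R z) - P (s *\<^sub>R z)) / norm (s *\<^sub>R z) ^ 3) \<longlongrightarrow> 0) (at_right 0)"
        using filterlim_compose[OF L1 fl] .
      have L3: "((\<lambda>s. (f (s *\<^sub>R z) - P (s *\<^sub>R z)) / s ^ 3) \<longlongrightarrow> 0) (at_right 0)"
      proof -
        have "((\<lambda>s. (f (s *\<^sub>R z) - P (s *\<^sub>R z)) / norm (s *\<^sub>R z) ^ 3 * norm z ^ 3) \<longlongrightarrow> 0 * norm z ^ 3) (at_right 0)"
          by (intro tendsto_intros L2)
        then have "((\<lambda>s. (f (s *\<^sub>R z) - P (s *\<^sub>R z)) / norm (s *\<^sub>R z) ^ 3 * norm z ^ 3) \<longlongrightarrow> 0) (at_right 0)"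
          by simp
        then show ?thesis
          by (rule Lim_transform_eventually)
             (use False in \<open>auto intro!: eventually_mono[OF ev0] simp: power_mult_distrib\<close>)
      qed
      have L4: "((\<lambda>s. (f (s *\<^sub>R z) - (\<Sum>m<4. c m * s^m)) / s ^ 3) \<longlongrightarrow> 0) (at_right 0)"
      proof (rule tendsto_0_le[OF tendsto_ident_at[of "0::real" "{0<..}"], of _ "\<bar>M / fact 4\<bar> * norm z ^ 4"])
        show "\<forall>\<^sub>F s in at_right 0. norm ((f (s *\<^sub>R z) - (\<Sum>m<4. c m * s^m)) / s ^ 3) \<le> norm s * (\<bar>M / fact 4\<bar> * norm z ^ 4)"
          using ev0 ev1
        proof eventually_elim
          case (elim s)
          have "\<bar>f (s *\<^sub>R z) - (\<Sum>m<4. c m * s^m)\<bar> \<le> \<bar>M / fact 4\<bar> * norm z ^ 4 * s ^ 4"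
            using T[of s] elim by (smt (verit) mult_right_mono zero_le_power norm_ge_zero mult_nonneg_nonneg)
          then have "\<bar>f (s *\<^sub>R z) - (\<Sum>m<4. c m * s^m)\<bar> / s^3 \<le> \<bar>M / fact 4\<bar> * norm z ^ 4 * s ^ 4 / s^3"
            by (intro divide_right_mono) (use elim in auto)
          then show ?case using elim by (simp add: abs_divide power_eq_if algebra_simps)
        qed
      qed
      have L5: "((\<lambda>s. (d1 * s + d2 * s^2 + d3 * s^3) / s^3) \<longlongrightarrow> 0) (at_right 0)"
      proof -
        have "((\<lambda>s. (f (s *\<^sub>R z) - P (s *\<^sub>R z)) / s ^ 3 - (f (s *\<^sub>R z) - (\<Sum>m<4. c m * s^m)) / s ^ 3) \<longlongrightarrow> 0 - 0) (at_right 0)"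
          by (intro tendsto_intros L3 L4)
        moreover have "(f (s *\<^sub>R z) - P (s *\<^sub>R z)) / s ^ 3 - (f (s *\<^sub>R z) - (\<Sum>m<4. c m * s^m)) / s ^ 3
              = (d1 * s + d2 * s^2 + d3 * s^3) / s^3" for s
          by (simp add: hom d1_d2_d3_def c0 eval_nat_numeral diff_divide_distrib[symmetric] algebra_simps)
        ultimately show ?thesis by simp
      qed
      have "d1 = 0 \<and> d2 = 0 \<and> d3 = 0" using poly_small[of 0 d1 d2 d3] L5 by simp
      then have "(\<Sum>m<4. c m * 1^m) = P z"
        using hom[of 1 z] by (simp add: d1_d2_d3_def c0 eval_nat_numeral)
      then show ?thesis using T[of 1] by simp
    qed
  qed
  then show ?thesis using d by blast
qed




lemma int_cis0:
  fixes k :: int assumes "k \<noteq> 0"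
  shows "((\<lambda>t. cis (of_int k * t)) has_integral 0) {0..2*pi}"
proof -
  define F where "F = (\<lambda>x::complex. exp (\<i> * of_int k * x) / (\<i> * of_int k))"
  have d: "((\<lambda>t. F (of_real t)) has_vector_derivative cis (of_int k * t)) (at t within {0..2*pi})" for t
  proof -
    have "(F has_field_derivative exp (\<i> * of_int k * of_real t)) (at (of_real t))"
      unfolding F_def using assms by (auto intro!: derivative_eq_intros)
    moreover have "exp (\<i> * of_int k * of_real t) = cis (of_int k * t)"
      by (simp add: cis_conv_exp mult.assoc)
    ultimately show ?thesis using has_vector_derivative_real_field by metis
  qed
  have "((\<lambda>t. cis (of_int k * t)) has_integral (F (of_real (2*pi)) - F (of_real 0))) {0..2*pi}"
    by (rule fundamental_theorem_of_calculus) (use d in auto)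
  moreover have "F (of_real (2*pi)) = F (of_real 0)"
  proof -
    have "exp (\<i> * of_int k * of_real (2*pi)) = cis (2 * pi * of_int k)"
      by (simp add: cis_conv_exp algebra_simps)
    also have "\<dots> = 1" by simp
    finally show ?thesis by (simp add: F_def)
  qed
  ultimately show ?thesis by simp
qed

definition T7 :: "complex \<Rightarrow> complex \<Rightarrow> complex \<Rightarrow> complex \<Rightarrow> complex \<Rightarrow> complex \<Rightarrow> complex \<Rightarrow> complex \<Rightarrow> complex" where
  "T7 a b1 b2 b3 c1 c2 c3 e = a + b1 * e + b2 * e^2 + b3 * e^3 + c1 * inverse e + c2 * inverse e ^ 2 + c3 * inverse e ^ 3"

lemma int_cis0': "k \<noteq> 0 \<Longrightarrow> ((\<lambda>t. c * cis (of_int k * t)) has_integral 0) {0..2*pi}"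
  using has_integral_mult_right[OF int_cis0, of k c] by simp

lemma T7_int: "((\<lambda>t. T7 a b1 b2 b3 c1 c2 c3 (cis t)) has_integral (of_real (2*pi) * a)) {0..2*pi}"
proof -
  have cp: "cis (of_int (int n) * t) = cis t ^ n" for n t using Complex.DeMoivre[of t n] by simp
  have cn: "cis (of_int (- int n) * t) = inverse (cis t) ^ n" for n t
    by (simp add: Complex.DeMoivre cis_inverse[of t])
  have e: "T7 a b1 b2 b3 c1 c2 c3 (cis t) = a + b1 * cis (of_int (int 1) * t) + b2 * cis (of_int (int 2) * t) + b3 * cis (of_int (int 3) * t)
     + c1 * cis (of_int (- int 1) * t) + c2 * cis (of_int (- int 2) * t) + c3 * cis (of_int (- int 3) * t)" for t
    unfolding T7_def cp cn by simp
  have "((\<lambda>t. a + b1 * cis (of_int (int 1) * t) + b2 * cis (of_int (int 2) * t) + b3 * cis (of_int (int 3) * t)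
     + c1 * cis (of_int (- int 1) * t) + c2 * cis (of_int (- int 2) * t) + c3 * cis (of_int (- int 3) * t)) has_integral
     (Henstock_Kurzweil_Integration.content {0..2*pi} *\<^sub>R a + 0 + 0 + 0 + 0 + 0 + 0)) {0..2*pi}"
    by (intro has_integral_add has_integral_const_real int_cis0') auto
  then show ?thesis unfolding e[symmetric] by (simp add: scaleR_conv_of_real)
qed

lemma zeta_T7:
  fixes e :: complex assumes "e \<noteq> 0"
  shows "((1+e)/2)^1 * ((1+inverse e)/2)^0 = T7 (1/2) (1/2) 0 0 0 0 0 e"
    "((1+e)/2)^0 * ((1+inverse e)/2)^1 = T7 (1/2) 0 0 0 (1/2) 0 0 e"
    "((1+e)/2)^2 * ((1+inverse e)/2)^0 = T7 (1/4) (1/2) (1/4) 0 0 0 0 e"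
    "((1+e)/2)^0 * ((1+inverse e)/2)^2 = T7 (1/4) 0 0 0 (1/2) (1/4) 0 e"
    "((1+e)/2)^1 * ((1+inverse e)/2)^1 = T7 (1/2) (1/4) 0 0 (1/4) 0 0 e"
    "((1+e)/2)^3 * ((1+inverse e)/2)^0 = T7 (1/8) (3/8) (3/8) (1/8) 0 0 0 e"
    "((1+e)/2)^0 * ((1+inverse e)/2)^3 = T7 (1/8) 0 0 0 (3/8) (3/8) (1/8) e"
    "((1+e)/2)^2 * ((1+inverse e)/2)^1 = T7 (3/8) (3/8) (1/8) 0 (1/8) 0 0 e"
    "((1+e)/2)^1 * ((1+inverse e)/2)^2 = T7 (3/8) (1/8) 0 0 (3/8) (1/8) 0 e"
  using assms by (simp_all add: T7_def field_simps power2_eq_square power3_eq_cube)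

definition zeta :: "real \<Rightarrow> complex" where "zeta t = (1 + cis t) / 2"

lemma cnj_zeta: "cnj (zeta t) = (1 + inverse (cis t)) / 2"
  by (simp add: zeta_def cis_cnj cis_inverse)

lemma zeta_gen: "(\<And>t. zeta t ^ p * cnj (zeta t) ^ q = T7 a b1 b2 b3 c1 c2 c3 (cis t)) \<Longrightarrow>
   ((\<lambda>t. zeta t ^ p * cnj (zeta t) ^ q) has_integral (of_real (2*pi) * a)) {0..2*pi}"
  using T7_int[of a b1 b2 b3 c1 c2 c3] by simp

lemma zeta_int:
  assumes "1 \<le> p + q" "p + q \<le> 3"
  shows "((\<lambda>t. zeta t ^ p * cnj (zeta t) ^ q) has_integral
     (of_real (2*pi) * ((1/2)^(p+q) + (if 0 < p \<and> 0 < q then 1/4 else 0)))) {0..2*pi}"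
proof -
  have "p \<in> {0,1,2,3}" "q \<in> {0,1,2,3}" using assms by auto
  then have c: "(p,q) \<in> {(1,0),(0,1),(2,0),(0,2),(1,1),(3,0),(0,3),(2,1),(1,2)}"
    using assms by auto
  have nz: "cis t \<noteq> 0" for t by simp
  note z = zeta_T7[OF nz]
  have h1: "((\<lambda>t. zeta t ^ 1 * cnj (zeta t) ^ 0) has_integral (of_real (2*pi) * (1/2))) {0..2*pi}"
    by (rule zeta_gen) (unfold cnj_zeta, unfold zeta_def, rule z(1))
  have h2: "((\<lambda>t. zeta t ^ 0 * cnj (zeta t) ^ 1) has_integral (of_real (2*pi) * (1/2))) {0..2*pi}"
    by (rule zeta_gen) (unfold cnj_zeta, unfold zeta_def, rule z(2))
  have h3: "((\<lambda>t. zeta t ^ 2 * cnj (zeta t) ^ 0) has_integral (of_real (2*pi) * (1/4))) {0..2*pi}"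
    by (rule zeta_gen) (unfold cnj_zeta, unfold zeta_def, rule z(3))
  have h4: "((\<lambda>t. zeta t ^ 0 * cnj (zeta t) ^ 2) has_integral (of_real (2*pi) * (1/4))) {0..2*pi}"
    by (rule zeta_gen) (unfold cnj_zeta, unfold zeta_def, rule z(4))
  have h5: "((\<lambda>t. zeta t ^ 1 * cnj (zeta t) ^ 1) has_integral (of_real (2*pi) * (1/2))) {0..2*pi}"
    by (rule zeta_gen) (unfold cnj_zeta, unfold zeta_def, rule z(5))
  have h6: "((\<lambda>t. zeta t ^ 3 * cnj (zeta t) ^ 0) has_integral (of_real (2*pi) * (1/8))) {0..2*pi}"
    by (rule zeta_gen) (unfold cnj_zeta, unfold zeta_def, rule z(6))
  have h7: "((\<lambda>t. zeta t ^ 0 * cnj (zeta t) ^ 3) has_integral (of_real (2*pi) * (1/8))) {0..2*pi}"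
    by (rule zeta_gen) (unfold cnj_zeta, unfold zeta_def, rule z(7))
  have h8: "((\<lambda>t. zeta t ^ 2 * cnj (zeta t) ^ 1) has_integral (of_real (2*pi) * (3/8))) {0..2*pi}"
    by (rule zeta_gen) (unfold cnj_zeta, unfold zeta_def, rule z(8))
  have h9: "((\<lambda>t. zeta t ^ 1 * cnj (zeta t) ^ 2) has_integral (of_real (2*pi) * (3/8))) {0..2*pi}"
    by (rule zeta_gen) (unfold cnj_zeta, unfold zeta_def, rule z(9))
  have "(p = 1 \<and> q = 0) \<or> (p = 0 \<and> q = 1) \<or> (p = 2 \<and> q = 0) \<or> (p = 0 \<and> q = 2) \<or> (p = 1 \<and> q = 1) \<or> (p = 3 \<and> q = 0) \<or> (p = 0 \<and> q = 3) \<or> (p = 2 \<and> q = 1) \<or> (p = 1 \<and> q = 2)" using c by simp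
  then show ?thesis
  proof (elim disjE)
    assume "p = 1 \<and> q = 0"
    then have e: "p = 1" "q = 0" by simp_all
    show ?thesis unfolding e by (rule has_integral_eq_rhs[OF h1]) (simp add: field_simps power2_eq_square power3_eq_cube)
  next
    assume "p = 0 \<and> q = 1"
    then have e: "p = 0" "q = 1" by simp_all
    show ?thesis unfolding e by (rule has_integral_eq_rhs[OF h2]) (simp add: field_simps power2_eq_square power3_eq_cube)
  next
    assume "p = 2 \<and> q = 0"
    then have e: "p = 2" "q = 0" by simp_all
    show ?thesis unfolding e by (rule has_integral_eq_rhs[OF h3]) (simp add: field_simps power2_eq_square power3_eq_cube)
  next
    assume "p = 0 \<and> q = 2"
    then have e: "p = 0" "q = 2" by simp_all
    show ?thesis unfolding e by (rule has_integral_eq_rhs[OF h4]) (simp add: field_simps power2_eq_square power3_eq_cube)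
  next
    assume "p = 1 \<and> q = 1"
    then have e: "p = 1" "q = 1" by simp_all
    show ?thesis unfolding e by (rule has_integral_eq_rhs[OF h5]) (simp add: field_simps power2_eq_square power3_eq_cube)
  next
    assume "p = 3 \<and> q = 0"
    then have e: "p = 3" "q = 0" by simp_all
    show ?thesis unfolding e by (rule has_integral_eq_rhs[OF h6]) (simp add: field_simps power2_eq_square power3_eq_cube)
  next
    assume "p = 0 \<and> q = 3"
    then have e: "p = 0" "q = 3" by simp_all
    show ?thesis unfolding e by (rule has_integral_eq_rhs[OF h7]) (simp add: field_simps power2_eq_square power3_eq_cube)
  next
    assume "p = 2 \<and> q = 1"
    then have e: "p = 2" "q = 1" by simp_all
    show ?thesis unfolding e by (rule has_integral_eq_rhs[OF h8]) (simp add: field_simps power2_eq_square power3_eq_cube)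
  next
    assume "p = 1 \<and> q = 2"
    then have e: "p = 1" "q = 2" by simp_all
    show ?thesis unfolding e by (rule has_integral_eq_rhs[OF h9]) (simp add: field_simps power2_eq_square power3_eq_cube)
  qed
qed




lemma norm_smult_vec: "norm (c *s (z :: complex ^ 'n)) = norm c * norm z"
  unfolding norm_vec_def by (simp add: L2_set_right_distrib norm_mult)

lemma scaleR_smult_vec: "s *\<^sub>R (z :: complex ^ 'n) = complex_of_real s *s z"
  unfolding vec_eq_iff vector_scaleR_component vector_smult_component by (simp add: scaleR_conv_of_real)

lemma mi_le: "\<alpha> i \<le> mi_abs (\<alpha> :: 'n::finite \<Rightarrow> nat)"
  unfolding mi_abs_def by (rule member_le_sum) auto

lemma mi_zero: "mi_abs (\<alpha> :: 'n::finite \<Rightarrow> nat) = 0 \<longleftrightarrow> \<alpha> = (\<lambda>_. 0)"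
  unfolding mi_abs_def by (auto simp: fun_eq_iff)

lemma mi_abs_zero [simp]: "mi_abs (\<lambda>_::'n::finite. 0::nat) = 0"
  unfolding mi_abs_def by simp

lemma finite_bounded_funs: "finite {\<alpha> :: 'n::finite \<Rightarrow> nat. \<forall>i. \<alpha> i \<le> j}"
proof -
  have "{\<alpha> :: 'n \<Rightarrow> nat. \<forall>i. \<alpha> i \<le> j} = (\<Pi>\<^sub>E i \<in> UNIV. {..j})"
    by (auto simp: PiE_def Pi_def extensional_def)
  then show ?thesis by (simp add: finite_PiE)
qed

lemma finite_I: "finite {(\<alpha>, \<beta>). mi_abs (\<alpha> :: 'n::finite \<Rightarrow> nat) + mi_abs (\<beta> :: 'n \<Rightarrow> nat) = j}"
proof (rule finite_subset)
  show "{(\<alpha>, \<beta>). mi_abs (\<alpha> :: 'n::finite \<Rightarrow> nat) + mi_abs (\<beta> :: 'n \<Rightarrow> nat) = j}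
    \<subseteq> {\<alpha>. \<forall>i. \<alpha> i \<le> j} \<times> {\<alpha>. \<forall>i. \<alpha> i \<le> j}"
  proof clarsimp
    fix \<alpha> \<beta> :: "'n \<Rightarrow> nat" assume "j = mi_abs \<alpha> + mi_abs \<beta>"
    then show "(\<forall>i. \<alpha> i \<le> mi_abs \<alpha> + mi_abs \<beta>) \<and> (\<forall>i. \<beta> i \<le> mi_abs \<alpha> + mi_abs \<beta>)"
      using mi_le[of \<alpha>] mi_le[of \<beta>] by (auto intro: trans_le_add1 trans_le_add2)
  qed
qed (intro finite_cartesian_product finite_bounded_funs)

lemma finite_H: "finite {\<alpha> :: 'n::finite \<Rightarrow> nat. mi_abs \<alpha> = j}"
  by (rule finite_subset[OF _ finite_bounded_funs[of j]]) (use mi_le in auto)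

lemma zpow_smult: "zpow (c *s z) \<alpha> = c ^ mi_abs \<alpha> * zpow z \<alpha>"
  unfolding zpow_def mi_abs_def
  by (simp add: power_mult_distrib prod.distrib power_sum)

lemma zpow_zero: "zpow z (\<lambda>_. 0) = 1"
  unfolding zpow_def by simp

lemma cnjvec_smult: "(\<chi> i. cnj ((c *s z) $ i)) = cnj c *s (\<chi> i. cnj (z $ i))"
  by (simp add: vec_eq_iff)

lemma zpow_cnj: "zpow (\<chi> i. cnj (z $ i)) \<alpha> = cnj (zpow z \<alpha>)"
  unfolding zpow_def by simp

definition coef :: "(('n::finite \<Rightarrow> nat) \<Rightarrow> ('n \<Rightarrow> nat) \<Rightarrow> complex) \<Rightarrow> complex ^ 'n \<Rightarrow> ('n \<Rightarrow> nat) \<times> ('n \<Rightarrow> nat) \<Rightarrow> complex" where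
  "coef a z = (\<lambda>(\<alpha>,\<beta>). a \<alpha> \<beta> * zpow z \<alpha> * zpow (\<chi> i. cnj (z $ i)) \<beta>)"

abbreviation Iset :: "nat \<Rightarrow> (('n::finite \<Rightarrow> nat) \<times> ('n \<Rightarrow> nat)) set" where
  "Iset j \<equiv> {(\<alpha>, \<beta>). mi_abs \<alpha> + mi_abs \<beta> = j}"

lemma polyQ_coef: "polyQ j a z = (\<Sum>x\<in>Iset j. coef a z x)"
  unfolding polyQ_def coef_def by simp

lemma polyQ_smult: "polyQ j a (c *s z) =
   (\<Sum>x\<in>Iset j. coef a z x * (c ^ mi_abs (fst x) * cnj c ^ mi_abs (snd x)))"
  unfolding polyQ_def coef_def cnjvec_smult zpow_smult
  by (intro sum.cong refl) (auto simp: algebra_simps)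

lemma polyQ_real: "polyQ j a (complex_of_real s *s z) = complex_of_real s ^ j * polyQ j a z"
proof -
  have "polyQ j a (complex_of_real s *s z) = (\<Sum>x\<in>Iset j. complex_of_real s ^ j * coef a z x)"
    unfolding polyQ_smult
    by (intro sum.cong refl) (auto simp: power_add[symmetric] mult.commute)
  then show ?thesis by (simp add: polyQ_coef sum_distrib_left)
qed

lemma split_sum:
  fixes z :: "complex ^ 'n::finite"
  assumes "1 \<le> j" "real_coeffs j a"
  shows "(\<Sum>x\<in>Iset j. if 0 < mi_abs (fst x) \<and> 0 < mi_abs (snd x) then coef a z x else 0)
     = polyQ j a z - polyH j a z - cnj (polyH j a z)"
proof -
  note fin = finite_I[of j]
  have pt: "coef a z x = (if 0 < mi_abs (fst x) \<and> 0 < mi_abs (snd x) then coef a z x else 0)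
      + (if snd x = (\<lambda>_. 0) then coef a z x else 0) + (if fst x = (\<lambda>_. 0) then coef a z x else 0)"
    if "x \<in> Iset j" for x :: "('n \<Rightarrow> nat) \<times> ('n \<Rightarrow> nat)"
  proof -
    obtain \<alpha> \<beta> where x: "x = (\<alpha>, \<beta>)" by (cases x)
    have s: "mi_abs \<alpha> + mi_abs \<beta> = j" using that x by auto
    show ?thesis
    proof (cases "0 < mi_abs \<alpha> \<and> 0 < mi_abs \<beta>")
      case True
      then have "\<alpha> \<noteq> (\<lambda>_. 0)" "\<beta> \<noteq> (\<lambda>_. 0)" by auto
      then show ?thesis using True x by simp
    next
      case False
      then have "(\<alpha> = (\<lambda>_. 0) \<and> \<beta> \<noteq> (\<lambda>_. 0)) \<or> (\<alpha> \<noteq> (\<lambda>_. 0) \<and> \<beta> = (\<lambda>_. 0))"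
        using s assms(1) mi_zero[of \<alpha>] mi_zero[of \<beta>] by auto
      then show ?thesis using False x by auto
    qed
  qed
  have A: "(\<Sum>x\<in>Iset j. if snd x = (\<lambda>_. 0) then coef a z x else 0) = polyH j a z"
  proof -
    have "(\<Sum>x\<in>Iset j. if snd x = (\<lambda>_. 0) then coef a z x else 0)
        = (\<Sum>x\<in>{x\<in>Iset j. snd x = (\<lambda>_. 0)}. coef a z x)"
      by (rule sum.inter_filter[OF fin, symmetric])
    also have "{x\<in>Iset j. snd x = (\<lambda>_. 0)} = (\<lambda>\<alpha>. (\<alpha>, \<lambda>_. 0)) ` {\<alpha>. mi_abs \<alpha> = j}"
      by (auto simp: mi_zero)
    also have "(\<Sum>x\<in>(\<lambda>\<alpha>. (\<alpha>, \<lambda>_. 0)) ` {\<alpha>. mi_abs \<alpha> = j}. coef a z x) =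
        (\<Sum>\<alpha>\<in>{\<alpha>. mi_abs \<alpha> = j}. coef a z (\<alpha>, \<lambda>_. 0))"
      by (rule sum.reindex_cong[where l = "\<lambda>\<alpha>. (\<alpha>, \<lambda>_. 0)"]) (auto simp: inj_on_def)
    finally show ?thesis by (simp add: polyH_def coef_def zpow_zero)
  qed
  have B: "(\<Sum>x\<in>Iset j. if fst x = (\<lambda>_. 0) then coef a z x else 0) = cnj (polyH j a z)"
  proof -
    have "(\<Sum>x\<in>Iset j. if fst x = (\<lambda>_. 0) then coef a z x else 0)
        = (\<Sum>x\<in>{x\<in>Iset j. fst x = (\<lambda>_. 0)}. coef a z x)"
      by (rule sum.inter_filter[OF fin, symmetric])
    also have "{x\<in>Iset j. fst x = (\<lambda>_. 0)} = (\<lambda>\<beta>. (\<lambda>_. 0, \<beta>)) ` {\<beta>. mi_abs \<beta> = j}"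
      by (auto simp: mi_zero)
    also have "(\<Sum>x\<in>(\<lambda>\<beta>. (\<lambda>_. 0, \<beta>)) ` {\<beta>. mi_abs \<beta> = j}. coef a z x) =
        (\<Sum>\<beta>\<in>{\<beta>. mi_abs \<beta> = j}. coef a z (\<lambda>_. 0, \<beta>))"
      by (rule sum.reindex_cong[where l = "\<lambda>\<beta>. (\<lambda>_. 0, \<beta>)"]) (auto simp: inj_on_def)
    also have "\<dots> = (\<Sum>\<beta>\<in>{\<beta>. mi_abs \<beta> = j}. cnj (a \<beta> (\<lambda>_. 0) * zpow z \<beta>))"
    proof (intro sum.cong refl)
      fix \<beta> :: "'n \<Rightarrow> nat" assume b: "\<beta> \<in> {\<beta>. mi_abs \<beta> = j}"
      have "mi_abs (\<lambda>_::'n. 0::nat) + mi_abs \<beta> = j" using b by simp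
      then have "a (\<lambda>_. 0) \<beta> = cnj (a \<beta> (\<lambda>_. 0))"
        using assms(2) unfolding real_coeffs_def by blast
      then show "coef a z (\<lambda>_. 0, \<beta>) = cnj (a \<beta> (\<lambda>_. 0) * zpow z \<beta>)"
        by (simp add: coef_def zpow_zero zpow_cnj)
    qed
    finally show ?thesis by (simp add: polyH_def)
  qed
  have "polyQ j a z = (\<Sum>x\<in>Iset j. (if 0 < mi_abs (fst x) \<and> 0 < mi_abs (snd x) then coef a z x else 0)
      + (if snd x = (\<lambda>_. 0) then coef a z x else 0) + (if fst x = (\<lambda>_. 0) then coef a z x else 0))"
    unfolding polyQ_coef using pt by (intro sum.cong) auto
  also have "\<dots> = (\<Sum>x\<in>Iset j. if 0 < mi_abs (fst x) \<and> 0 < mi_abs (snd x) then coef a z x else 0)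
     + polyH j a z + cnj (polyH j a z)"
    by (simp add: sum.distrib A B)
  finally show ?thesis by simp
qed

lemma polyQ_int:
  fixes z :: "complex ^ 'n::finite"
  assumes "1 \<le> j" "j \<le> 3" "real_coeffs j a"
  shows "((\<lambda>t. polyQ j a (zeta t *s z)) has_integral
     of_real (2*pi) * ((1/2)^j * polyQ j a z + 1/4 * (polyQ j a z - polyH j a z - cnj (polyH j a z)))) {0..2*pi}"
proof -
  have "((\<lambda>t. \<Sum>x\<in>Iset j. coef a z x * (zeta t ^ mi_abs (fst x) * cnj (zeta t) ^ mi_abs (snd x))) has_integral
     (\<Sum>x\<in>Iset j. coef a z x * (of_real (2*pi) * ((1/2)^j + (if 0 < mi_abs (fst x) \<and> 0 < mi_abs (snd x) then 1/4 else 0))))) {0..2*pi}"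
  proof (intro has_integral_sum[OF finite_I] has_integral_mult_right)
    fix x :: "('n \<Rightarrow> nat) \<times> ('n \<Rightarrow> nat)" assume "x \<in> Iset j"
    then have s: "mi_abs (fst x) + mi_abs (snd x) = j" by auto
    show "((\<lambda>t. zeta t ^ mi_abs (fst x) * cnj (zeta t) ^ mi_abs (snd x)) has_integral
      of_real (2*pi) * ((1/2)^j + (if 0 < mi_abs (fst x) \<and> 0 < mi_abs (snd x) then 1/4 else 0))) {0..2*pi}"
      using zeta_int[of "mi_abs (fst x)" "mi_abs (snd x)"] s assms by simp
  qed
  moreover have "(\<Sum>x\<in>Iset j. coef a z x * (of_real (2*pi) * ((1/2)^j + (if 0 < mi_abs (fst x) \<and> 0 < mi_abs (snd x) then 1/4 else 0))))
     = of_real (2*pi) * ((1/2)^j * (\<Sum>x\<in>Iset j. coef a z x) + 1/4 * (\<Sum>x\<in>Iset j. if 0 < mi_abs (fst x) \<and> 0 < mi_abs (snd x) then coef a z x else 0))"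
  proof -
    have "(\<Sum>x\<in>Iset j. coef a z x * (of_real (2*pi) * ((1/2)^j + (if 0 < mi_abs (fst x) \<and> 0 < mi_abs (snd x) then 1/4 else 0))))
      = (\<Sum>x\<in>Iset j. of_real (2*pi) * ((1/2)^j * coef a z x + 1/4 * (if 0 < mi_abs (fst x) \<and> 0 < mi_abs (snd x) then coef a z x else 0)))"
      by (intro sum.cong refl) (auto simp: algebra_simps)
    also have "\<dots> = of_real (2*pi) * ((\<Sum>x\<in>Iset j. (1/2)^j * coef a z x) + (\<Sum>x\<in>Iset j. 1/4 * (if 0 < mi_abs (fst x) \<and> 0 < mi_abs (snd x) then coef a z x else 0)))"
      by (simp add: sum_distrib_left[symmetric] sum.distrib)
    finally show ?thesis by (simp add: sum_distrib_left)
  qed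
  ultimately show ?thesis
    unfolding polyQ_smult split_sum[OF assms(1,3)] polyQ_coef[symmetric] by simp
qed




lemma final_arith:
  fixes ra A X Pa Pz rz M q2 q3 h2 h3 CC N LL :: real
  shows "ra \<le> A + X \<Longrightarrow> Pa - X \<le> ra \<Longrightarrow> Pz - X \<le> rz \<Longrightarrow> 8*Pa = 4*M + 2*q2 + q3 \<Longrightarrow>
    8*A = 4*M + 4*q2 + 3*q3 - 4*h2 - 4*h3 \<Longrightarrow> 0 \<le> X \<Longrightarrow> Pz = M + q2 + q3 \<Longrightarrow>
    CC = 9*X + N \<Longrightarrow> 0 \<le> N \<Longrightarrow> LL = M + 2*h2 + 2*h3 \<Longrightarrow> LL - CC \<le> rz"
  by linarith

theorem mainTheorem4:
  fixes r :: "complex ^ 'n \<Rightarrow> real" and U :: "(complex ^ 'n) set" and m :: 'n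
    and a2 a3 :: "('n \<Rightarrow> nat) \<Rightarrow> ('n \<Rightarrow> nat) \<Rightarrow> complex"
  assumes "open U" and "0 \<in> U"
    and "Ck_on 4 U r" and "psh_on U r" and "r 0 = 0"
    and "real_coeffs 2 a2" and "real_coeffs 3 a3"
    and "(\<lambda>z. r z - (Re (z $ m) + Re (polyQ 2 a2 z) + Re (polyQ 3 a3 z)))
           \<in> o[at 0](\<lambda>z. norm z ^ 3)"
  shows "\<exists>V C. open V \<and> 0 \<in> V \<and> V \<subseteq> U \<and> C > 0 \<and>
     (\<forall>z\<in>V. r z \<ge> Re (z $ m) + 2 * Re (polyH 2 a2 z + polyH 3 a3 z) - C * norm z ^ 4) \<and>
     {z\<in>V. r z < 0} \<subseteq>
       {z\<in>V. Re (z $ m) + 2 * Re (polyH 2 a2 z + polyH 3 a3 z) - C * norm z ^ 4 < 0}"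
proof -
  define Pf where "Pf w = Re (w $ m) + Re (polyQ 2 a2 w) + Re (polyQ 3 a3 w)" for w :: "complex ^ 'n"
  have Re_of_real_mult: "Re (complex_of_real s ^ j * w) = s ^ j * Re w" for s j w
    by (simp flip: of_real_power)
  have hom: "Pf (s *\<^sub>R z) = s * Re (z $ m) + s^2 * Re (polyQ 2 a2 z) + s^3 * Re (polyQ 3 a3 z)" for s z
    unfolding Pf_def scaleR_smult_vec polyQ_real Re_of_real_mult by simp
  have o: "(\<lambda>z. r z - Pf z) \<in> o[at 0](\<lambda>z. norm z ^ 3)" using assms(8) by (simp add: Pf_def)
  obtain \<delta> K where d: "\<delta> > 0" "cball 0 \<delta> \<subseteq> U" and KK: "\<forall>z\<in>cball 0 \<delta>. \<bar>r z - Pf z\<bar> \<le> K * norm z ^ 4"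
    using R_bound[OF assms(1,2,3,5) hom o] by blast
  define K' where "K' = \<bar>K\<bar>"
  have K'0: "K' \<ge> 0" by (simp add: K'_def)
  have Kb: "\<bar>r z - Pf z\<bar> \<le> K' * norm z ^ 4" if "z \<in> cball 0 \<delta>" for z
  proof -
    have "K * norm z ^ 4 \<le> K' * norm z ^ 4" by (intro mult_right_mono) (auto simp: K'_def)
    then show ?thesis using KK that by fastforce
  qed
  define L where "L z = Re (z $ m) + 2 * Re (polyH 2 a2 z + polyH 3 a3 z)" for z :: "complex ^ 'n"
  define C where "C = 9 * K' + 1"
  have key: "r z \<ge> L z - C * norm z ^ 4" if z: "z \<in> ball 0 \<delta>" for z
  proof -
    have zc: "z \<in> cball 0 \<delta>" using z by auto
    have nz: "norm z < \<delta>" using z by simp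
    define a where "a = complex_of_real (1/2) *s z"
    have path: "a + \<zeta> *s a = ((1 + \<zeta>) / 2) *s z" for \<zeta>
      unfolding a_def by (simp add: vec_eq_iff algebra_simps)
    have inU: "c *s z \<in> cball 0 \<delta>" if "norm c \<le> 1" for c
    proof -
      have "norm (c *s z) \<le> norm z" unfolding norm_smult_vec
        using that by (simp add: mult_left_le_one_le)
      then show ?thesis using zc by simp
    qed
    have disc: "\<forall>\<zeta>::complex. norm \<zeta> \<le> 1 \<longrightarrow> a + \<zeta> *s a \<in> U"
    proof (intro allI impI)
      fix \<zeta> :: complex assume "norm \<zeta> \<le> 1"
      then have "norm ((1 + \<zeta>) / 2) \<le> 1"
        using norm_triangle_ineq[of 1 \<zeta>] by (simp add: norm_divide)
      then show "a + \<zeta> *s a \<in> U" unfolding path using inU d(2) by blast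
    qed
    have zn: "norm (zeta t) \<le> 1" for t
      using norm_triangle_ineq[of 1 "cis t"] by (simp add: zeta_def norm_divide)
    have pz: "a + cis t *s a = zeta t *s z" for t unfolding path zeta_def ..
    have ps: "\<forall>a b. (\<forall>\<zeta>::complex. norm \<zeta> \<le> 1 \<longrightarrow> a + \<zeta> *s b \<in> U) \<longrightarrow>
        r a \<le> (1 / (2 * pi)) * integral {0..2*pi} (\<lambda>t. r (a + cis t *s b))"
      using assms(4) unfolding psh_on_def by (rule conjunct2)
    have sub: "r a \<le> (1 / (2 * pi)) * integral {0..2*pi} (\<lambda>t. r (zeta t *s z))"
      using ps[THEN spec, THEN spec, THEN mp, OF disc] unfolding pz .
    define Avc where "Avc = z $ m / 2 + ((1/2)^2 * polyQ 2 a2 z + 1/4 * (polyQ 2 a2 z - polyH 2 a2 z - cnj (polyH 2 a2 z)))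
       + ((1/2)^3 * polyQ 3 a3 z + 1/4 * (polyQ 3 a3 z - polyH 3 a3 z - cnj (polyH 3 a3 z)))"
    have lin: "((\<lambda>t. (zeta t *s z) $ m) has_integral of_real (2*pi) * (z $ m / 2)) {0..2*pi}"
    proof -
      have "((\<lambda>t. z $ m * (zeta t ^ 1 * cnj (zeta t) ^ 0)) has_integral z $ m * (of_real (2*pi) * ((1/2)^(1+0) + (if 0 < (1::nat) \<and> 0 < (0::nat) then 1/4 else 0)))) {0..2*pi}"
        by (intro has_integral_mult_right zeta_int) auto
      then show ?thesis by (simp add: mult.commute)
    qed
    have hc: "((\<lambda>t. (zeta t *s z) $ m + polyQ 2 a2 (zeta t *s z) + polyQ 3 a3 (zeta t *s z)) has_integral of_real (2*pi) * Avc) {0..2*pi}"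
    proof -
      have "((\<lambda>t. (zeta t *s z) $ m + polyQ 2 a2 (zeta t *s z) + polyQ 3 a3 (zeta t *s z)) has_integral
         of_real (2*pi) * (z $ m / 2) + of_real (2*pi) * ((1/2)^2 * polyQ 2 a2 z + 1/4 * (polyQ 2 a2 z - polyH 2 a2 z - cnj (polyH 2 a2 z)))
         + of_real (2*pi) * ((1/2)^3 * polyQ 3 a3 z + 1/4 * (polyQ 3 a3 z - polyH 3 a3 z - cnj (polyH 3 a3 z)))) {0..2*pi}"
        by (intro has_integral_add lin polyQ_int assms(6,7)) auto
      then show ?thesis by (simp add: Avc_def algebra_simps)
    qed
    have hP: "((\<lambda>t. Pf (zeta t *s z)) has_integral 2 * pi * Re Avc) {0..2*pi}"
      using has_integral_linear[OF hc bounded_linear_Re] by (simp add: Pf_def o_def)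
    have hPK: "((\<lambda>t. Pf (zeta t *s z) + K' * norm z ^ 4) has_integral 2 * pi * Re Avc + 2 * pi * (K' * norm z ^ 4)) {0..2*pi}"
      using has_integral_add[OF hP has_integral_const_real[of "K' * norm z ^ 4" 0 "2*pi"]] by simp
    have cpath: "continuous_on {0..2*pi} (\<lambda>t. zeta t *s z)"
    proof -
      have "(\<lambda>t. zeta t *s z) = (\<lambda>t. \<chi> i. (1 + cis t) / 2 * z $ i)"
        by (simp add: vec_eq_iff zeta_def fun_eq_iff)
      moreover have "continuous_on {0..2*pi} (\<lambda>t. \<chi> i. (1 + cis t) / 2 * z $ i)"
        by (intro continuous_intros) auto
      ultimately show ?thesis by (simp only:)
    qed
    have rcont: "continuous_on {0..2*pi} (\<lambda>t. r (zeta t *s z))"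
      by (rule continuous_on_compose2[OF Ck_cont[OF assms(3)] cpath]) (use inU zn d(2) in blast)
    have ptw: "r (zeta t *s z) \<le> Pf (zeta t *s z) + K' * norm z ^ 4" for t
    proof -
      have w: "zeta t *s z \<in> cball 0 \<delta>" using inU zn by blast
      have "norm (zeta t *s z) \<le> norm z" unfolding norm_smult_vec using zn[of t]
        by (simp add: mult_left_le_one_le)
      then have "K' * norm (zeta t *s z) ^ 4 \<le> K' * norm z ^ 4"
        using K'0 by (intro mult_left_mono power_mono) auto
      then show ?thesis using Kb[OF w] by linarith
    qed
    have "integral {0..2*pi} (\<lambda>t. r (zeta t *s z)) \<le> integral {0..2*pi} (\<lambda>t. Pf (zeta t *s z) + K' * norm z ^ 4)"
      by (rule integral_le[OF integrable_continuous_real[OF rcont] has_integral_integrable[OF hPK] ptw])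
    also have "\<dots> = 2 * pi * Re Avc + 2 * pi * (K' * norm z ^ 4)"
      using hPK by (rule integral_unique)
    finally have I: "integral {0..2*pi} (\<lambda>t. r (zeta t *s z)) \<le> 2 * pi * (Re Avc + K' * norm z ^ 4)"
      by (simp add: algebra_simps)
    have "2 * pi * r a \<le> integral {0..2*pi} (\<lambda>t. r (zeta t *s z))"
      using sub pi_gt_zero by (simp add: field_simps)
    then have "2 * pi * r a \<le> 2 * pi * (Re Avc + K' * norm z ^ 4)" using I by linarith
    then have up: "r a \<le> Re Avc + K' * norm z ^ 4"
      using pi_gt_zero by (simp add: mult_le_cancel_left_pos)
    have ac: "a \<in> cball 0 \<delta>" unfolding a_def by (rule inU) simp
    have "norm a \<le> norm z" unfolding a_def norm_smult_vec by simp
    then have "K' * norm a ^ 4 \<le> K' * norm z ^ 4" using K'0 by (intro mult_left_mono power_mono) auto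
    then have lowa: "r a \<ge> Pf a - K' * norm z ^ 4" using Kb[OF ac] by linarith
    have lowz: "r z \<ge> Pf z - K' * norm z ^ 4" using Kb[OF zc] by linarith
    have Pfa: "Pf a = Re (z $ m) / 2 + (1/4) * Re (polyQ 2 a2 z) + (1/8) * Re (polyQ 3 a3 z)"
      unfolding a_def Pf_def polyQ_real Re_of_real_mult by (simp add: power2_eq_square power3_eq_cube)
    have ReA: "Re Avc = Re (z $ m) / 2 + (1/4) * Re (polyQ 2 a2 z) + 1/4 * (Re (polyQ 2 a2 z) - 2 * Re (polyH 2 a2 z))
         + (1/8) * Re (polyQ 3 a3 z) + 1/4 * (Re (polyQ 3 a3 z) - 2 * Re (polyH 3 a3 z))"
      by (simp add: Avc_def power2_eq_square power3_eq_cube)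
    have nn: "0 \<le> K' * norm z ^ 4" using K'0 by simp
    have Pfz: "Pf z = Re (z $ m) + Re (polyQ 2 a2 z) + Re (polyQ 3 a3 z)" by (simp add: Pf_def)
    have Cz: "C * norm z ^ 4 = 9 * (K' * norm z ^ 4) + norm z ^ 4" by (simp add: C_def algebra_simps)
    have n4: "norm z ^ 4 \<ge> 0" by simp
    have LL: "L z = Re (z $ m) + 2 * Re (polyH 2 a2 z) + 2 * Re (polyH 3 a3 z)" by (simp add: L_def)
    have Pfa8: "8 * Pf a = 4 * Re (z $ m) + 2 * Re (polyQ 2 a2 z) + Re (polyQ 3 a3 z)"
      unfolding Pfa by (simp add: algebra_simps)
    have ReA8: "8 * Re Avc = 4 * Re (z $ m) + 4 * Re (polyQ 2 a2 z) + 3 * Re (polyQ 3 a3 z) - 4 * Re (polyH 2 a2 z) - 4 * Re (polyH 3 a3 z)"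
      unfolding ReA by (simp add: algebra_simps)
    show ?thesis by (rule final_arith[OF up lowa lowz Pfa8 ReA8 nn Pfz Cz n4 LL])
  qed
  show ?thesis
  proof (intro exI conjI)
    show "open (ball (0 :: complex ^ 'n) \<delta>)" by simp
    show "0 \<in> ball (0 :: complex ^ 'n) \<delta>" using d by simp
    show "ball 0 \<delta> \<subseteq> U" using d(2) by auto
    show "C > 0" using K'0 by (simp add: C_def)
    show "\<forall>z\<in>ball 0 \<delta>. r z \<ge> Re (z $ m) + 2 * Re (polyH 2 a2 z + polyH 3 a3 z) - C * norm z ^ 4"
      using key by (simp add: L_def)
    show "{z\<in>ball 0 \<delta>. r z < 0} \<subseteq>
       {z\<in>ball 0 \<delta>. Re (z $ m) + 2 * Re (polyH 2 a2 z + polyH 3 a3 z) - C * norm z ^ 4 < 0}"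
      using key by (force simp: L_def)
  qed
qed



end
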